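(* Let $q$ be a prime power, let $\mathbb{F}_q$ be the field with $q$ elements, let $d \ge 4$, and let $a_1,\ldots,a_d \in \mathbb{F}_q\setminus\{0\}$ satisfy $a_1+\cdots+a_d = 0$. There exists a constant $c_q < q$ such that for all sufficiently large $n$, every set $A \subset \mathbb{F}_q^n$ with $|A| > c_q^n$ contains pairwise distinct elements $x_1,\ldots,x_d \in A$ satisfying \[ a_1x_1 + a_2x_2 + \cdots + a_dx_d = 0. \] *)

theory Defs
  imports Complex_Main
begin

text \<open>The vector space F^n, represented as functions nat => F that vanish
outside the coordinates 0..n-1.\<close>
definition fvecs :: "nat \<Rightarrow> (nat \<Rightarrow> 'a::zero) set" where
  "fvecs n = {x. \<forall>i\<ge>n. x i = 0}"

end

theory Submission
  imports Defs "HOL-Library.FuncSet"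
begin
lemma ff_pow:
  fixes x :: "'a::{field,finite}"
  assumes "x \<noteq> 0"
  shows "x ^ (card (UNIV::'a set) - 1) = 1"
proof -
  let ?U = "UNIV - {0::'a}"
  have fin: "finite ?U" by simp
  have bij: "bij_betw (\<lambda>y. x * y) ?U ?U"
    unfolding bij_betw_def
  proof
    show "inj_on ((*) x) ?U" using assms by (auto simp: inj_on_def)
    show "(*) x ` ?U = ?U"
    proof
      show "(*) x ` ?U \<subseteq> ?U" using assms by auto
      show "?U \<subseteq> (*) x ` ?U"
      proof
        fix y assume "y \<in> ?U"
        then have "y = x * (y / x)" "y / x \<in> ?U" using assms by auto
        then show "y \<in> (*) x ` ?U" by blast
      qed
    qed
  qed
  have "(\<Prod>y\<in>?U. y) = (\<Prod>y\<in>?U. x * y)"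
    using prod.reindex_bij_betw[OF bij, of "\<lambda>y. y"] by simp
  also have "\<dots> = x ^ card ?U * (\<Prod>y\<in>?U. y)"
    by (simp add: prod.distrib)
  finally have e: "(\<Prod>y\<in>?U. y) = x ^ card ?U * (\<Prod>y\<in>?U. y)" .
  have nz: "(\<Prod>y\<in>?U. y) \<noteq> 0" by simp
  have "x ^ card ?U = 1" using e nz
    by (metis mult_cancel_right1)
  moreover have "card ?U = card (UNIV::'a set) - 1" by (simp add: card_Diff_singleton)
  ultimately show ?thesis by simp
qed

lemma matrix_bound:
  fixes u v :: "'k \<Rightarrow> 's \<Rightarrow> 'a::field"
  assumes "finite K" "finite S"
    and "\<And>x y. x \<in> S \<Longrightarrow> y \<in> S \<Longrightarrow> (if x = y then 1 else 0) = (\<Sum>k\<in>K. u k x * v k y)"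
  shows "card S \<le> card K"
  using assms
proof (induction K arbitrary: S u rule: finite_induct)
  case empty
  then have "S = {}" by (metis (full_types) empty_iff sum.empty one_neq_zero equals0I)
  then show ?case by simp
next
  case (insert k0 K0)
  show ?case
  proof (cases "\<forall>s\<in>S. u k0 s = 0")
    case True
    have "\<And>x y. x \<in> S \<Longrightarrow> y \<in> S \<Longrightarrow> (if x = y then 1 else 0) = (\<Sum>k\<in>K0. u k x * v k y)"
      using insert True by simp
    then have "card S \<le> card K0" using insert.IH insert.prems(1) by blast
    then show ?thesis using insert by simp
  next
    case False
    then obtain s0 where s0: "s0 \<in> S" "u k0 s0 \<noteq> 0" by blast
    define lam where "lam x = u k0 x / u k0 s0" for x
    define u' where "u' k x = u k x - lam x * u k s0" for k x
    have "\<And>x y. x \<in> S - {s0} \<Longrightarrow> y \<in> S - {s0} \<Longrightarrow> (if x = y then 1 else 0) = (\<Sum>k\<in>K0. u' k x * v k y)"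
    proof -
      fix x y assume xy: "x \<in> S - {s0}" "y \<in> S - {s0}"
      have "(\<Sum>k\<in>K0. u' k x * v k y) = (\<Sum>k\<in>insert k0 K0. u' k x * v k y)"
        using insert s0 by (simp add: u'_def lam_def)
      also have "\<dots> = (\<Sum>k\<in>insert k0 K0. u k x * v k y) - lam x * (\<Sum>k\<in>insert k0 K0. u k s0 * v k y)"
        by (simp add: u'_def algebra_simps sum_subtractf sum_distrib_left)
      also have "\<dots> = (if x = y then 1 else 0) - lam x * (if s0 = y then 1 else 0)"
        using insert.prems(2)[of x y] insert.prems(2)[of s0 y] xy s0 by simp
      also have "\<dots> = (if x = y then 1 else 0)" using xy by auto
      finally show "(if x = y then 1 else 0) = (\<Sum>k\<in>K0. u' k x * v k y)" by simp
    qed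
    then have "card (S - {s0}) \<le> card K0" using insert.IH insert.prems(1) by blast
    then show ?thesis using insert s0 by (simp add: card_Diff_singleton)
  qed
qed

lemma tensor_bound:
  fixes fa fb fc :: "'k \<Rightarrow> 's \<Rightarrow> 'a::field"
  assumes "finite K3" "finite S" "finite K1" "finite K2"
    and "\<And>x y z. x \<in> S \<Longrightarrow> y \<in> S \<Longrightarrow> z \<in> S \<Longrightarrow>
      (if x = y \<and> y = z then 1 else 0) =
      (\<Sum>k\<in>K1. fa k x * ga k y z) + (\<Sum>k\<in>K2. fb k y * gb k x z) + (\<Sum>k\<in>K3. fc k z * gc k x y)"
  shows "card S \<le> card K1 + card K2 + card K3"
  using assms
proof (induction K3 arbitrary: S ga gb fc rule: finite_induct)
  case empty
  define u where "u k x = (case k of Inl k1 \<Rightarrow> fa k1 x | Inr k2 \<Rightarrow> (\<Sum>z\<in>S. gb k2 x z))" for k x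
  define v where "v k y = (case k of Inl k1 \<Rightarrow> (\<Sum>z\<in>S. ga k1 y z) | Inr k2 \<Rightarrow> fb k2 y)" for k y
  have "\<And>x y. x \<in> S \<Longrightarrow> y \<in> S \<Longrightarrow> (if x = y then 1 else 0) = (\<Sum>k\<in>K1 <+> K2. u k x * v k y)"
  proof -
    fix x y assume xy: "x \<in> S" "y \<in> S"
    have "(if x = y then 1 else (0::'a)) = (\<Sum>z\<in>S. if x = y \<and> y = z then 1 else 0)"
      using xy empty.prems(1) by (simp add: sum.delta)
    also have "\<dots> = (\<Sum>z\<in>S. (\<Sum>k\<in>K1. fa k x * ga k y z) + (\<Sum>k\<in>K2. fb k y * gb k x z))"
      using empty.prems(4) xy by (intro sum.cong) auto
    also have "\<dots> = (\<Sum>k\<in>K1. fa k x * (\<Sum>z\<in>S. ga k y z)) + (\<Sum>k\<in>K2. (\<Sum>z\<in>S. gb k x z) * fb k y)"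
      by (simp add: sum.distrib sum_distrib_left sum_distrib_right sum.swap[of _ S] mult.commute)
    also have "\<dots> = (\<Sum>k\<in>K1 <+> K2. u k x * v k y)"
      using empty.prems by (simp add: sum.Plus u_def v_def o_def)
    finally show "(if x = y then 1 else 0) = (\<Sum>k\<in>K1 <+> K2. u k x * v k y)" .
  qed
  then have "card S \<le> card (K1 <+> K2)"
    using matrix_bound[of "K1 <+> K2" S u v] empty.prems by auto
  then show ?case using empty.prems by (simp add: card_Plus)
next
  case (insert k0 K0)
  show ?case
  proof (cases "\<forall>s\<in>S. fc k0 s = 0")
    case True
    have "\<And>x y z. x \<in> S \<Longrightarrow> y \<in> S \<Longrightarrow> z \<in> S \<Longrightarrow>
      (if x = y \<and> y = z then 1 else 0) =
      (\<Sum>k\<in>K1. fa k x * ga k y z) + (\<Sum>k\<in>K2. fb k y * gb k x z) + (\<Sum>k\<in>K0. fc k z * gc k x y)"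
      using insert True by simp
    then have "card S \<le> card K1 + card K2 + card K0" using insert.IH insert.prems by blast
    then show ?thesis using insert by simp
  next
    case False
    then obtain s0 where s0: "s0 \<in> S" "fc k0 s0 \<noteq> 0" by blast
    define lam where "lam z = fc k0 z / fc k0 s0" for z
    define ga' where "ga' k y z = ga k y z - lam z * ga k y s0" for k y z
    define gb' where "gb' k x z = gb k x z - lam z * gb k x s0" for k x z
    define fc' where "fc' k z = fc k z - lam z * fc k s0" for k z
    have "\<And>x y z. x \<in> S - {s0} \<Longrightarrow> y \<in> S - {s0} \<Longrightarrow> z \<in> S - {s0} \<Longrightarrow>
      (if x = y \<and> y = z then 1 else 0) =
      (\<Sum>k\<in>K1. fa k x * ga' k y z) + (\<Sum>k\<in>K2. fb k y * gb' k x z) + (\<Sum>k\<in>K0. fc' k z * gc k x y)"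
    proof -
      fix x y z assume xyz: "x \<in> S - {s0}" "y \<in> S - {s0}" "z \<in> S - {s0}"
      have "(\<Sum>k\<in>K0. fc' k z * gc k x y) = (\<Sum>k\<in>insert k0 K0. fc' k z * gc k x y)"
        using insert s0 by (simp add: fc'_def lam_def)
      then have "(\<Sum>k\<in>K1. fa k x * ga' k y z) + (\<Sum>k\<in>K2. fb k y * gb' k x z) + (\<Sum>k\<in>K0. fc' k z * gc k x y)
        = ((\<Sum>k\<in>K1. fa k x * ga k y z) + (\<Sum>k\<in>K2. fb k y * gb k x z) + (\<Sum>k\<in>insert k0 K0. fc k z * gc k x y))
          - lam z * ((\<Sum>k\<in>K1. fa k x * ga k y s0) + (\<Sum>k\<in>K2. fb k y * gb k x s0) + (\<Sum>k\<in>insert k0 K0. fc k s0 * gc k x y))"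
        by (simp add: ga'_def gb'_def fc'_def algebra_simps sum_subtractf sum_distrib_left)
      also have "\<dots> = (if x = y \<and> y = z then 1 else 0) - lam z * (if x = y \<and> y = s0 then 1 else 0)"
        using insert.prems(4)[of x y z] insert.prems(4)[of x y s0] xyz s0 by simp
      also have "\<dots> = (if x = y \<and> y = z then 1 else 0)" using xyz by auto
      finally show "(if x = y \<and> y = z then 1 else 0) =
        (\<Sum>k\<in>K1. fa k x * ga' k y z) + (\<Sum>k\<in>K2. fb k y * gb' k x z) + (\<Sum>k\<in>K0. fc' k z * gc k x y)"
        by simp
    qed
    then have "card (S - {s0}) \<le> card K1 + card K2 + card K0"
      using insert.IH[of "S - {s0}" ga' gb' fc'] insert.prems by blast
    then show ?thesis using insert s0 by (simp add: card_Diff_singleton)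
  qed
qed

definition ex1 :: "(nat \<times> nat) option \<Rightarrow> nat" where
  "ex1 e = (case e of None \<Rightarrow> 0 | Some kl \<Rightarrow> fst kl)"
definition ex2 :: "(nat \<times> nat) option \<Rightarrow> nat" where
  "ex2 e = (case e of None \<Rightarrow> 0 | Some kl \<Rightarrow> snd kl)"
definition ex3 :: "nat \<Rightarrow> (nat \<times> nat) option \<Rightarrow> nat" where
  "ex3 m e = (case e of None \<Rightarrow> 0 | Some kl \<Rightarrow> m - fst kl - snd kl)"
definition E0 :: "nat \<Rightarrow> (nat \<times> nat) option set" where
  "E0 m = insert None (Some ` (SIGMA k:{..m}. {..m-k}))"
definition coef :: "nat \<Rightarrow> (nat \<times> nat) option \<Rightarrow> 'a::comm_ring_1" where
  "coef m e = (case e of None \<Rightarrow> 1 | Some kl \<Rightarrow> - (of_nat (m choose fst kl) * of_nat ((m - fst kl) choose snd kl)))"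

lemma finite_E0: "finite (E0 m)" by (simp add: E0_def)

lemma ex_sum_le: "e \<in> E0 m \<Longrightarrow> ex1 e + ex2 e + ex3 m e \<le> m"
  by (auto simp: E0_def ex1_def ex2_def ex3_def)

lemma coord_expand:
  fixes x y z :: "'a::comm_ring_1"
  shows "1 - (x + y + z) ^ m = (\<Sum>e\<in>E0 m. coef m e * x ^ ex1 e * y ^ ex2 e * z ^ ex3 m e)"
proof -
  have "(x + y + z) ^ m = (x + (y + z)) ^ m" by (simp add: add.assoc)
  also have "\<dots> = (\<Sum>k\<le>m. of_nat (m choose k) * x ^ k * (y + z) ^ (m - k))"
    by (simp add: binomial_ring)
  also have "\<dots> = (\<Sum>k\<le>m. \<Sum>l\<le>m-k. of_nat (m choose k) * of_nat ((m - k) choose l) * x ^ k * y ^ l * z ^ (m - k - l))"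
    by (simp add: binomial_ring sum_distrib_left mult.assoc mult.left_commute)
  also have "\<dots> = (\<Sum>kl\<in>(SIGMA k:{..m}. {..m-k}). of_nat (m choose fst kl) * of_nat ((m - fst kl) choose snd kl) * x ^ fst kl * y ^ snd kl * z ^ (m - fst kl - snd kl))"
    by (simp add: sum.Sigma split_beta)
  finally have e: "(x + y + z) ^ m = \<dots>" .
  have "(\<Sum>e\<in>E0 m. coef m e * x ^ ex1 e * y ^ ex2 e * z ^ ex3 m e)
      = 1 + (\<Sum>e\<in>Some ` (SIGMA k:{..m}. {..m-k}). coef m e * x ^ ex1 e * y ^ ex2 e * z ^ ex3 m e)"
    unfolding E0_def by (subst sum.insert) (auto simp: coef_def ex1_def ex2_def ex3_def)
  also have "\<dots> = 1 - (\<Sum>kl\<in>(SIGMA k:{..m}. {..m-k}). of_nat (m choose fst kl) * of_nat ((m - fst kl) choose snd kl) * x ^ fst kl * y ^ snd kl * z ^ (m - fst kl - snd kl))"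
    by (subst sum.reindex) (auto simp: coef_def ex1_def ex2_def ex3_def sum_negf)
  finally show ?thesis using e by simp
qed

definition mnm :: "(nat \<Rightarrow> 'a::comm_ring_1) \<Rightarrow> nat \<Rightarrow> (nat \<Rightarrow> nat) \<Rightarrow> 'a" where
  "mnm X n al = (\<Prod>i<n. X i ^ al i)"

definition Cf :: "nat \<Rightarrow> nat \<Rightarrow> (nat \<Rightarrow> (nat \<times> nat) option) \<Rightarrow> 'a::comm_ring_1" where
  "Cf m n f = (\<Prod>i<n. coef m (f i))"

definition al1 where "al1 n f = restrict (\<lambda>i. ex1 (f i)) {..<n}"
definition al2 where "al2 n f = restrict (\<lambda>i. ex2 (f i)) {..<n}"
definition al3 where "al3 m n f = restrict (\<lambda>i. ex3 m (f i)) {..<n}"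

lemma poly_decomp:
  fixes X Y Z :: "nat \<Rightarrow> 'a::comm_ring_1"
  shows "(\<Prod>i<n. 1 - (X i + Y i + Z i) ^ m) =
    (\<Sum>f\<in>PiE {..<n} (\<lambda>_. E0 m). Cf m n f * mnm X n (al1 n f) * mnm Y n (al2 n f) * mnm Z n (al3 m n f))"
proof -
  have "(\<Prod>i<n. 1 - (X i + Y i + Z i) ^ m) =
     (\<Prod>i<n. \<Sum>e\<in>E0 m. coef m e * X i ^ ex1 e * Y i ^ ex2 e * Z i ^ ex3 m e)"
    by (simp add: coord_expand)
  also have "\<dots> = (\<Sum>f\<in>PiE {..<n} (\<lambda>_. E0 m). \<Prod>i<n. coef m (f i) * X i ^ ex1 (f i) * Y i ^ ex2 (f i) * Z i ^ ex3 m (f i))"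
    by (rule prod_sum_PiE) (auto simp: finite_E0)
  also have "\<dots> = (\<Sum>f\<in>PiE {..<n} (\<lambda>_. E0 m). Cf m n f * mnm X n (al1 n f) * mnm Y n (al2 n f) * mnm Z n (al3 m n f))"
    by (intro sum.cong refl) (simp add: prod.distrib Cf_def mnm_def al1_def al2_def al3_def)
  finally show ?thesis .
qed

definition mons :: "nat \<Rightarrow> nat \<Rightarrow> (nat \<Rightarrow> nat) set" where
  "mons q n = {al \<in> PiE {..<n} (\<lambda>_. {..<q}). 3 * (\<Sum>i<n. al i) \<le> (q - 1) * n}"

lemma finite_mons: "finite (mons q n)"
proof -
  have "mons q n \<subseteq> PiE {..<n} (\<lambda>_. {..<q})" unfolding mons_def by blast
  then show ?thesis by (rule finite_subset) (simp add: finite_PiE)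
qed

lemma restrict_in_mons:
  assumes "\<forall>i<n. e i < q" "3 * (\<Sum>i<n. e i) \<le> (q - 1) * n"
  shows "restrict e {..<n} \<in> mons q n"
proof -
  have "restrict e {..<n} \<in> PiE {..<n} (\<lambda>_. {..<q})" using assms(1) by (simp add: restrict_PiE_iff)
  moreover have "(\<Sum>i<n. restrict e {..<n} i) = (\<Sum>i<n. e i)" by (intro sum.cong) auto
  ultimately show ?thesis unfolding mons_def using assms(2) by simp
qed

lemma slice_bound:
  fixes pa pb pc :: "'s \<Rightarrow> nat \<Rightarrow> 'a::{field,finite}"
  assumes finS: "finite S"
    and van: "\<And>s i. s \<in> S \<Longrightarrow> n \<le> i \<Longrightarrow> pa s i = 0 \<and> pb s i = 0 \<and> pc s i = 0"
    and diag: "\<And>s i. s \<in> S \<Longrightarrow> pa s i + pb s i + pc s i = 0"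
    and off: "\<And>s1 s2 s3. s1 \<in> S \<Longrightarrow> s2 \<in> S \<Longrightarrow> s3 \<in> S \<Longrightarrow>
       (\<forall>i. pa s1 i + pb s2 i + pc s3 i = 0) \<Longrightarrow> s1 = s2 \<and> s2 = s3"
  shows "card S \<le> 3 * card (mons (card (UNIV::'a set)) n)"
proof -
  define q where "q = card (UNIV::'a set)"
  define m where "m = q - 1"
  have q2: "q \<ge> 2"
  proof -
    have "{0::'a, 1} \<subseteq> UNIV" by simp
    then have "card {0::'a, 1} \<le> q" unfolding q_def by (intro card_mono) auto
    then show ?thesis by simp
  qed
  then have m1: "m \<ge> 1" unfolding m_def by simp
  define T where "T x y z = (\<Prod>i<n. 1 - (pa x i + pb y i + pc z i) ^ m)" for x y z
  have Tval: "T x y z = (if x = y \<and> y = z then 1 else 0)" if xyz: "x \<in> S" "y \<in> S" "z \<in> S" for x y z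
  proof (cases "\<forall>i<n. pa x i + pb y i + pc z i = 0")
    case True
    have "\<forall>i. pa x i + pb y i + pc z i = 0"
    proof
      fix i show "pa x i + pb y i + pc z i = 0"
      proof (cases "i < n")
        case True then show ?thesis using \<open>\<forall>i<n. pa x i + pb y i + pc z i = 0\<close> by blast
      next
        case False
        then have "n \<le> i" by simp
        then show ?thesis using van[OF xyz(1)] van[OF xyz(2)] van[OF xyz(3)] by simp
      qed
    qed
    then have "x = y \<and> y = z" using off xyz by blast
    moreover have "T x y z = 1" unfolding T_def using True m1 by (simp add: zero_power)
    ultimately show ?thesis by simp
  next
    case False
    then obtain i where i: "i < n" "pa x i + pb y i + pc z i \<noteq> 0" by blast
    then have "1 - (pa x i + pb y i + pc z i) ^ m = 0"
      using ff_pow[OF i(2)] unfolding m_def q_def by simp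
    then have "T x y z = 0" unfolding T_def using i(1) by (intro prod_zero) auto
    moreover have "\<not> (x = y \<and> y = z)" using diag False xyz by auto
    ultimately show ?thesis by simp
  qed
  define P where "P = PiE {..<n} (\<lambda>_. E0 m)"
  have finP: "finite P" unfolding P_def by (simp add: finite_E0 finite_PiE)
  define d1 where "d1 f = (\<Sum>i<n. ex1 (f i))" for f :: "nat \<Rightarrow> (nat \<times> nat) option"
  define d2 where "d2 f = (\<Sum>i<n. ex2 (f i))" for f :: "nat \<Rightarrow> (nat \<times> nat) option"
  define d3 where "d3 f = (\<Sum>i<n. ex3 m (f i))" for f :: "nat \<Rightarrow> (nat \<times> nat) option"
  have dsum: "d1 f + d2 f + d3 f \<le> m * n" if "f \<in> P" for f
  proof -
    have "d1 f + d2 f + d3 f = (\<Sum>i<n. ex1 (f i) + ex2 (f i) + ex3 m (f i))"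
      by (simp add: d1_def d2_def d3_def sum.distrib)
    also have "\<dots> \<le> (\<Sum>i<n. m)"
      using that ex_sum_le unfolding P_def by (intro sum_mono) (auto simp: PiE_def Pi_def)
    finally show ?thesis by (simp add: mult.commute)
  qed
  define F1 where "F1 = {f\<in>P. 3 * d1 f \<le> m * n}"
  define F2 where "F2 = {f\<in>P. \<not> 3 * d1 f \<le> m * n \<and> 3 * d2 f \<le> m * n}"
  define F3 where "F3 = {f\<in>P. \<not> 3 * d1 f \<le> m * n \<and> \<not> 3 * d2 f \<le> m * n}"
  have F3d: "3 * d3 f \<le> m * n" if "f \<in> F3" for f
    using that dsum[of f] unfolding F3_def by auto
  define h where "h x y z f = Cf m n f * mnm (pa x) n (al1 n f) * mnm (pb y) n (al2 n f) * mnm (pc z) n (al3 m n f)" for x y z f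
  have Tdec: "T x y z = sum (h x y z) F1 + sum (h x y z) F2 + sum (h x y z) F3" for x y z
  proof -
    have "T x y z = sum (h x y z) P"
      unfolding T_def h_def P_def by (rule poly_decomp)
    also have "\<dots> = (\<Sum>f\<in>P. (if 3 * d1 f \<le> m * n then h x y z f else 0)
         + (if \<not> 3 * d1 f \<le> m * n \<and> 3 * d2 f \<le> m * n then h x y z f else 0)
         + (if \<not> 3 * d1 f \<le> m * n \<and> \<not> 3 * d2 f \<le> m * n then h x y z f else 0))"
      by (intro sum.cong) auto
    also have "\<dots> = sum (h x y z) F1 + sum (h x y z) F2 + sum (h x y z) F3"
      unfolding F1_def F2_def F3_def using finP by (simp add: sum.distrib sum.inter_filter)
    finally show ?thesis .
  qed
  define K1 where "K1 = al1 n ` F1"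
  define K2 where "K2 = al2 n ` F2"
  define K3 where "K3 = al3 m n ` F3"
  define g1 where "g1 k y z = (\<Sum>f\<in>{f\<in>F1. al1 n f = k}. Cf m n f * mnm (pb y) n (al2 n f) * mnm (pc z) n (al3 m n f))" for k y z
  define g2 where "g2 k x z = (\<Sum>f\<in>{f\<in>F2. al2 n f = k}. Cf m n f * mnm (pa x) n (al1 n f) * mnm (pc z) n (al3 m n f))" for k x z
  define g3 where "g3 k x y = (\<Sum>f\<in>{f\<in>F3. al3 m n f = k}. Cf m n f * mnm (pa x) n (al1 n f) * mnm (pb y) n (al2 n f))" for k x y
  have finF: "finite F1" "finite F2" "finite F3" using finP unfolding F1_def F2_def F3_def by auto
  have s1: "sum (h x y z) F1 = (\<Sum>k\<in>K1. mnm (pa x) n k * g1 k y z)" for x y z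
  proof -
    have "sum (h x y z) F1 = (\<Sum>k\<in>K1. sum (h x y z) {f\<in>F1. al1 n f = k})"
      unfolding K1_def by (rule sum.image_gen[OF finF(1)])
    also have "\<dots> = (\<Sum>k\<in>K1. mnm (pa x) n k * g1 k y z)"
    proof (intro sum.cong refl)
      fix k
      have "sum (h x y z) {f\<in>F1. al1 n f = k} = (\<Sum>f\<in>{f\<in>F1. al1 n f = k}. mnm (pa x) n k * (Cf m n f * mnm (pb y) n (al2 n f) * mnm (pc z) n (al3 m n f)))"
        by (intro sum.cong refl) (simp add: h_def mult_ac)
      then show "sum (h x y z) {f\<in>F1. al1 n f = k} = mnm (pa x) n k * g1 k y z"
        unfolding g1_def by (simp add: sum_distrib_left)
    qed
    finally show ?thesis .
  qed
  have s2: "sum (h x y z) F2 = (\<Sum>k\<in>K2. mnm (pb y) n k * g2 k x z)" for x y z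
  proof -
    have "sum (h x y z) F2 = (\<Sum>k\<in>K2. sum (h x y z) {f\<in>F2. al2 n f = k})"
      unfolding K2_def by (rule sum.image_gen[OF finF(2)])
    also have "\<dots> = (\<Sum>k\<in>K2. mnm (pb y) n k * g2 k x z)"
    proof (intro sum.cong refl)
      fix k
      have "sum (h x y z) {f\<in>F2. al2 n f = k} = (\<Sum>f\<in>{f\<in>F2. al2 n f = k}. mnm (pb y) n k * (Cf m n f * mnm (pa x) n (al1 n f) * mnm (pc z) n (al3 m n f)))"
        by (intro sum.cong refl) (simp add: h_def mult_ac)
      then show "sum (h x y z) {f\<in>F2. al2 n f = k} = mnm (pb y) n k * g2 k x z"
        unfolding g2_def by (simp add: sum_distrib_left)
    qed
    finally show ?thesis .
  qed
  have s3: "sum (h x y z) F3 = (\<Sum>k\<in>K3. mnm (pc z) n k * g3 k x y)" for x y z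
  proof -
    have "sum (h x y z) F3 = (\<Sum>k\<in>K3. sum (h x y z) {f\<in>F3. al3 m n f = k})"
      unfolding K3_def by (rule sum.image_gen[OF finF(3)])
    also have "\<dots> = (\<Sum>k\<in>K3. mnm (pc z) n k * g3 k x y)"
    proof (intro sum.cong refl)
      fix k
      have "sum (h x y z) {f\<in>F3. al3 m n f = k} = (\<Sum>f\<in>{f\<in>F3. al3 m n f = k}. mnm (pc z) n k * (Cf m n f * mnm (pa x) n (al1 n f) * mnm (pb y) n (al2 n f)))"
        by (intro sum.cong refl) (simp add: h_def mult_ac)
      then show "sum (h x y z) {f\<in>F3. al3 m n f = k} = mnm (pc z) n k * g3 k x y"
        unfolding g3_def by (simp add: sum_distrib_left)
    qed
    finally show ?thesis .
  qed
  have cK: "card S \<le> card K1 + card K2 + card K3"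
  proof (rule tensor_bound[where fa = "\<lambda>k x. mnm (pa x) n k" and ga = g1
          and fb = "\<lambda>k y. mnm (pb y) n k" and gb = g2 and fc = "\<lambda>k z. mnm (pc z) n k" and gc = g3])
    show "finite K1" "finite K2" "finite K3" using finF by (auto simp: K1_def K2_def K3_def)
    show "finite S" by (rule finS)
    fix x y z assume xyz: "x \<in> S" "y \<in> S" "z \<in> S"
    show "(if x = y \<and> y = z then 1 else 0) =
      (\<Sum>k\<in>K1. mnm (pa x) n k * g1 k y z) + (\<Sum>k\<in>K2. mnm (pb y) n k * g2 k x z) + (\<Sum>k\<in>K3. mnm (pc z) n k * g3 k x y)"
    proof -
      have "(if x = y \<and> y = z then 1 else 0) = T x y z" using Tval[OF xyz] by simp
      also have "\<dots> = sum (h x y z) F1 + sum (h x y z) F2 + sum (h x y z) F3" by (rule Tdec)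
      finally show ?thesis by (simp only: s1 s2 s3)
    qed
  qed
  have sK1: "K1 \<subseteq> mons q n"
  proof
    fix k assume "k \<in> K1"
    then obtain f where f: "f \<in> F1" "k = al1 n f" unfolding K1_def by auto
    have "f \<in> P" using f(1) unfolding F1_def by simp
    have A: "\<forall>i<n. ex1 (f i) < q"
    proof (intro allI impI)
      fix i assume "i < n"
      then have "f i \<in> E0 m" using \<open>f \<in> P\<close> unfolding P_def by (meson PiE_mem lessThan_iff)
      then have "ex1 (f i) + ex2 (f i) + ex3 m (f i) \<le> m" by (rule ex_sum_le)
      then show "ex1 (f i) < q" using q2 unfolding m_def by linarith
    qed
    have B: "3 * (\<Sum>i<n. ex1 (f i)) \<le> (q - 1) * n" using f(1)[unfolded F1_def] unfolding d1_def m_def by simp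
    show "k \<in> mons q n" unfolding f(2) al1_def by (rule restrict_in_mons[OF A B])
  qed
  have sK2: "K2 \<subseteq> mons q n"
  proof
    fix k assume "k \<in> K2"
    then obtain f where f: "f \<in> F2" "k = al2 n f" unfolding K2_def by auto
    have "f \<in> P" using f(1) unfolding F2_def by simp
    have A: "\<forall>i<n. ex2 (f i) < q"
    proof (intro allI impI)
      fix i assume "i < n"
      then have "f i \<in> E0 m" using \<open>f \<in> P\<close> unfolding P_def by (meson PiE_mem lessThan_iff)
      then have "ex1 (f i) + ex2 (f i) + ex3 m (f i) \<le> m" by (rule ex_sum_le)
      then show "ex2 (f i) < q" using q2 unfolding m_def by linarith
    qed
    have B: "3 * (\<Sum>i<n. ex2 (f i)) \<le> (q - 1) * n" using f(1)[unfolded F2_def] unfolding d2_def m_def by simp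
    show "k \<in> mons q n" unfolding f(2) al2_def by (rule restrict_in_mons[OF A B])
  qed
  have sK3: "K3 \<subseteq> mons q n"
  proof
    fix k assume "k \<in> K3"
    then obtain f where f: "f \<in> F3" "k = al3 m n f" unfolding K3_def by auto
    have "f \<in> P" using f(1) unfolding F3_def by simp
    have A: "\<forall>i<n. ex3 m (f i) < q"
    proof (intro allI impI)
      fix i assume "i < n"
      then have "f i \<in> E0 m" using \<open>f \<in> P\<close> unfolding P_def by (meson PiE_mem lessThan_iff)
      then have "ex1 (f i) + ex2 (f i) + ex3 m (f i) \<le> m" by (rule ex_sum_le)
      then show "ex3 m (f i) < q" using q2 unfolding m_def by linarith
    qed
    have B: "3 * (\<Sum>i<n. ex3 m (f i)) \<le> (q - 1) * n" using F3d[OF f(1)] unfolding d3_def m_def by simp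
    show "k \<in> mons q n" unfolding f(2) al3_def by (rule restrict_in_mons[OF A B])
  qed
  have "card K1 \<le> card (mons q n)" by (rule card_mono[OF finite_mons sK1])
  moreover have "card K2 \<le> card (mons q n)" by (rule card_mono[OF finite_mons sK2])
  moreover have "card K3 \<le> card (mons q n)" by (rule card_mono[OF finite_mons sK3])
  ultimately have "card S \<le> 3 * card (mons q n)" using cK by linarith
  then show ?thesis unfolding q_def .
qed

lemma mons_card_bound:
  fixes y :: real
  assumes "0 < y" "y \<le> 1"
  shows "real (card (mons q n)) * y ^ ((q - 1) * n) \<le> (\<Sum>k<q. y ^ (3 * k)) ^ n"
proof -
  have "real (card (mons q n)) * y ^ ((q - 1) * n) = (\<Sum>al\<in>mons q n. y ^ ((q - 1) * n))" by simp
  also have "\<dots> \<le> (\<Sum>al\<in>mons q n. y ^ (3 * (\<Sum>i<n. al i)))"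
  proof (rule sum_mono)
    fix al assume "al \<in> mons q n"
    then have "3 * (\<Sum>i<n. al i) \<le> (q - 1) * n" unfolding mons_def by simp
    then show "y ^ ((q - 1) * n) \<le> y ^ (3 * (\<Sum>i<n. al i))"
      using assms by (intro power_decreasing) auto
  qed
  also have "\<dots> \<le> (\<Sum>al\<in>PiE {..<n} (\<lambda>_. {..<q}). y ^ (3 * (\<Sum>i<n. al i)))"
    by (rule sum_mono2) (auto simp: mons_def finite_PiE assms(1) less_imp_le)
  also have "\<dots> = (\<Sum>al\<in>PiE {..<n} (\<lambda>_. {..<q}). \<Prod>i<n. y ^ (3 * al i))"
    by (intro sum.cong refl) (simp add: sum_distrib_left power_sum)
  also have "\<dots> = (\<Prod>i<n. \<Sum>k<q. y ^ (3 * k))"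
    by (rule prod_sum_PiE[symmetric]) auto
  also have "\<dots> = (\<Sum>k<q. y ^ (3 * k)) ^ n" by simp
  finally show ?thesis .
qed

lemma sum_3k: "(\<Sum>k<q. real (3 * k)) = 3 * real q * (real q - 1) / 2"
  by (induction q) (auto simp: field_simps)

lemma exists_y:
  assumes "q \<ge> 2"
  shows "\<exists>y::real. 0 < y \<and> y < 1 \<and> (\<Sum>k<q. y ^ (3 * k)) < real q * y ^ (q - 1)"
proof -
  define F where "F y = real q * y ^ (q - 1) - (\<Sum>k<q. y ^ (3 * k))" for y :: real
  have D: "DERIV F 1 :> real q * real (q - 1) - (\<Sum>k<q. real (3 * k))"
    unfolding F_def by (auto intro!: derivative_eq_intros)
  have P: "0 < real q * (real q - 1)" using assms by simp
  have "real q * real (q - 1) - (\<Sum>k<q. real (3 * k)) = - (real q * (real q - 1)) / 2"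
    unfolding sum_3k using assms by (simp add: of_nat_diff field_simps)
  then have "real q * real (q - 1) - (\<Sum>k<q. real (3 * k)) < 0" using P by simp
  then obtain d where d: "d > 0" "\<And>h. h > 0 \<Longrightarrow> h < d \<Longrightarrow> F 1 < F (1 - h)"
    using DERIV_neg_dec_left[OF D] by blast
  define h where "h = min (d / 2) (1 / 2)"
  have h: "h > 0" "h < d" "h < 1" using d unfolding h_def by auto
  have "F 1 = 0" unfolding F_def by simp
  then have "0 < F (1 - h)" using d(2)[OF h(1) h(2)] by simp
  then show ?thesis using h unfolding F_def by (intro exI[of _ "1 - h"]) auto
qed

definition issol :: "(nat \<Rightarrow> 'a::field) \<Rightarrow> nat set \<Rightarrow> (nat \<Rightarrow> 'a) set \<Rightarrow> (nat \<Rightarrow> nat \<Rightarrow> 'a) \<Rightarrow> bool" where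
  "issol a J A x \<longleftrightarrow> (\<forall>j\<in>J. x j \<in> A) \<and> inj_on x J \<and> (\<forall>i. (\<Sum>j\<in>J. a j * x j i) = 0)"

lemma finite_fvecs: "finite (fvecs n :: (nat \<Rightarrow> 'a::{zero,finite}) set)"
proof -
  have "fvecs n = {f :: nat \<Rightarrow> 'a. \<forall>x. (x \<in> {..<n} \<longrightarrow> f x \<in> UNIV) \<and> (x \<notin> {..<n} \<longrightarrow> f x = 0)}"
    unfolding fvecs_def by auto
  then show ?thesis using finite_set_of_finite_funs[of "{..<n}" "UNIV :: 'a set" 0] by simp
qed

lemma fvecs_van: "x \<in> fvecs n \<Longrightarrow> n \<le> i \<Longrightarrow> x i = 0"
  by (simp add: fvecs_def)

lemma greedy:
  fixes A :: "'b set" and I :: "'i set" and P :: "('i \<Rightarrow> 'b) \<Rightarrow> bool"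
  assumes "finite A" "finite I" "I \<noteq> {}"
    and "\<And>B. B \<subseteq> A \<Longrightarrow> L < card B \<Longrightarrow> \<exists>u. P u \<and> inj_on u I \<and> u ` I \<subseteq> B"
  shows "\<exists>S. (\<forall>u\<in>S. P u \<and> inj_on u I \<and> u ` I \<subseteq> A) \<and> (\<forall>u\<in>S. \<forall>v\<in>S. u \<noteq> v \<longrightarrow> u ` I \<inter> v ` I = {})
     \<and> finite S \<and> card A \<le> L + card I * card S"
  using assms
proof (induction "card A" arbitrary: A rule: less_induct)
  case less
  show ?case
  proof (cases "card A \<le> L")
    case True
    then show ?thesis by (intro exI[of _ "{}"]) auto
  next
    case False
    have "L < card A" using False by simp
    from less.prems(4)[OF order_refl this]
    obtain u where u: "P u" "inj_on u I" "u ` I \<subseteq> A" by blast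
    define A' where "A' = A - u ` I"
    have cI: "card (u ` I) = card I" using u(2) by (simp add: card_image)
    have cA': "card A' = card A - card I"
      unfolding A'_def using u(3) less.prems(1) cI by (simp add: card_Diff_subset finite_subset)
    have "card I > 0" using less.prems(2,3) by (simp add: card_gt_0_iff)
    moreover have "card I \<le> card A" using cI u(3) less.prems(1) by (metis card_mono)
    ultimately have lt: "card A' < card A" using cA' by simp
    have "\<exists>S. (\<forall>u\<in>S. P u \<and> inj_on u I \<and> u ` I \<subseteq> A') \<and> (\<forall>u\<in>S. \<forall>v\<in>S. u \<noteq> v \<longrightarrow> u ` I \<inter> v ` I = {})
       \<and> finite S \<and> card A' \<le> L + card I * card S"
    proof -
      have fA': "finite A'" unfolding A'_def using less.prems(1) by simp
      have exA': "\<And>B. B \<subseteq> A' \<Longrightarrow> L < card B \<Longrightarrow> \<exists>u. P u \<and> inj_on u I \<and> u ` I \<subseteq> B"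
      proof -
        fix B assume "B \<subseteq> A'" "L < card B"
        moreover have "A' \<subseteq> A" unfolding A'_def by blast
        ultimately show "\<exists>u. P u \<and> inj_on u I \<and> u ` I \<subseteq> B" using less.prems(4)[of B] by blast
      qed
      show ?thesis by (rule less.hyps[OF lt fA' less.prems(2) less.prems(3) exA'])
    qed
    then obtain S where SS: "(\<forall>u\<in>S. P u \<and> inj_on u I \<and> u ` I \<subseteq> A') \<and> (\<forall>u\<in>S. \<forall>v\<in>S. u \<noteq> v \<longrightarrow> u ` I \<inter> v ` I = {})
       \<and> finite S \<and> card A' \<le> L + card I * card S" by (rule exE)
    note S = SS[THEN conjunct1] SS[THEN conjunct2, THEN conjunct1] SS[THEN conjunct2, THEN conjunct2, THEN conjunct1]
      SS[THEN conjunct2, THEN conjunct2, THEN conjunct2]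
    have uS: "u \<notin> S"
    proof
      assume "u \<in> S"
      then have "u ` I \<subseteq> A'" using S(1) by blast
      moreover obtain i where "i \<in> I" using less.prems(3) by blast
      ultimately show False unfolding A'_def by auto
    qed
    have disj: "\<forall>v\<in>S. u ` I \<inter> v ` I = {}" using S(1) unfolding A'_def by blast
    show ?thesis
    proof (intro exI[of _ "insert u S"] conjI)
      show "\<forall>w\<in>insert u S. P w \<and> inj_on w I \<and> w ` I \<subseteq> A" using S(1) u unfolding A'_def by auto
      show "\<forall>w\<in>insert u S. \<forall>v\<in>insert u S. w \<noteq> v \<longrightarrow> w ` I \<inter> v ` I = {}"
        using S(2) disj by blast
      show "finite (insert u S)" using S(3) by simp
      show "card A \<le> L + card I * card (insert u S)"
        using S(3,4) uS cA' \<open>card I \<le> card A\<close> by simp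
    qed
  qed
qed

lemma disj_blocks:
  assumes "\<forall>u\<in>S. inj_on u I" "\<forall>u\<in>S. \<forall>v\<in>S. u \<noteq> v \<longrightarrow> u ` I \<inter> v ` I = {}"
    and "u \<in> S" "v \<in> S" "l \<in> I" "l' \<in> I" "u l = v l'"
  shows "u = v \<and> l = l'"
proof -
  have "u = v" using assms by blast
  then show ?thesis using assms by (metis inj_on_eq_iff)
qed

lemma case3:
  fixes a :: "nat \<Rightarrow> 'a::{field,finite}"
  assumes J: "J = {j1, j2, j3}" "j1 \<noteq> j2" "j2 \<noteq> j3" "j1 \<noteq> j3"
    and nz: "a j1 \<noteq> 0" "a j2 \<noteq> 0" "a j3 \<noteq> 0" and sz: "a j1 + a j2 + a j3 = 0"
    and A: "A \<subseteq> fvecs n" and nos: "\<not> (\<exists>x. issol a J A x)"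
  shows "card A \<le> 3 * card (mons (card (UNIV::'a set)) n)"
proof (rule slice_bound[where pa = "\<lambda>s t. a j1 * s t" and pb = "\<lambda>s t. a j2 * s t" and pc = "\<lambda>s t. a j3 * s t"])
  show "finite A" using A finite_fvecs finite_subset by blast
  fix s i assume "s \<in> A"
  then have "s \<in> fvecs n" using A by blast
  then show "n \<le> i \<Longrightarrow> a j1 * s i = 0 \<and> a j2 * s i = 0 \<and> a j3 * s i = 0" by (simp add: fvecs_van)
  have "a j1 * s i + a j2 * s i + a j3 * s i = (a j1 + a j2 + a j3) * s i" by (simp add: algebra_simps)
  then show "a j1 * s i + a j2 * s i + a j3 * s i = 0" using sz by simp
next
  fix s1 s2 s3 assume s: "s1 \<in> A" "s2 \<in> A" "s3 \<in> A" and H: "\<forall>i. a j1 * s1 i + a j2 * s2 i + a j3 * s3 i = 0"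
  show "s1 = s2 \<and> s2 = s3"
  proof (cases "s1 = s2")
    case True
    have "s3 = s1"
    proof
      fix t
      have "a j3 * (s3 t - s1 t) = (a j1 * s1 t + a j2 * s2 t + a j3 * s3 t) - (a j1 + a j2 + a j3) * s1 t" using True by (simp add: algebra_simps)
      then have "a j3 * (s3 t - s1 t) = 0" using H sz by simp
      then show "s3 t = s1 t" using nz by simp
    qed
    then show ?thesis using True by simp
  next
    case False
    show ?thesis
    proof (cases "s1 = s3")
      case True
      have "s2 = s1"
      proof
        fix t
        have "a j2 * (s2 t - s1 t) = (a j1 * s1 t + a j2 * s2 t + a j3 * s3 t) - (a j1 + a j2 + a j3) * s1 t" using True by (simp add: algebra_simps)
        then have "a j2 * (s2 t - s1 t) = 0" using H sz by simp
        then show "s2 t = s1 t" using nz by simp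
      qed
      then show ?thesis using False by simp
    next
      case False2: False
      show ?thesis
      proof (cases "s2 = s3")
        case True
        have "s1 = s2"
        proof
          fix t
          have "a j1 * (s1 t - s2 t) = (a j1 * s1 t + a j2 * s2 t + a j3 * s3 t) - (a j1 + a j2 + a j3) * s2 t" using True by (simp add: algebra_simps)
          then have "a j1 * (s1 t - s2 t) = 0" using H sz by simp
          then show "s1 t = s2 t" using nz by simp
        qed
        then show ?thesis using False by simp
      next
        case False3: False
        define x where "x l = (if l = j1 then s1 else if l = j2 then s2 else s3)" for l
        have "issol a J A x"
          unfolding issol_def
        proof (intro conjI ballI allI)
          fix l assume "l \<in> J" then show "x l \<in> A" using s J unfolding x_def by auto
        next
          show "inj_on x J" using J False False2 False3 unfolding x_def inj_on_def by auto
        next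
          fix i show "(\<Sum>j\<in>J. a j * x j i) = 0" using J H unfolding x_def by (simp add: add.assoc)
        qed
        then show ?thesis using nos by blast
      qed
    qed
  qed
qed

lemma caseA:
  fixes a :: "nat \<Rightarrow> 'a::{field,finite}"
  assumes finJ: "finite J" and ij: "i \<in> J" "j \<in> J" "i \<noteq> j" and b: "a i + a j \<noteq> 0"
    and A: "A \<subseteq> fvecs n" and nos: "\<not> (\<exists>x. issol a J A x)"
    and H: "\<And>B. B \<subseteq> A \<Longrightarrow> L < card B \<Longrightarrow> \<exists>x. issol (a(i := a i + a j)) (J - {j}) B x"
  shows "card A \<le> L + card J * (3 * card (mons (card (UNIV::'a set)) n))"
proof -
  define J' where "J' = J - {j}"
  define R where "R = J - {i, j}"
  define a' where "a' = a(i := a i + a j)"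
  define P where "P u = (\<forall>t. (\<Sum>l\<in>J'. a' l * u l t) = 0)" for u :: "nat \<Rightarrow> nat \<Rightarrow> 'a"
  have finA: "finite A" using A finite_fvecs finite_subset by blast
  have J'ne: "J' \<noteq> {}" using ij unfolding J'_def by blast
  have finJ': "finite J'" using finJ unfolding J'_def by simp
  have "\<exists>S. (\<forall>u\<in>S. P u \<and> inj_on u J' \<and> u ` J' \<subseteq> A) \<and> (\<forall>u\<in>S. \<forall>v\<in>S. u \<noteq> v \<longrightarrow> u ` J' \<inter> v ` J' = {})
     \<and> finite S \<and> card A \<le> L + card J' * card S"
  proof (rule greedy[OF finA finJ' J'ne])
    fix B assume "B \<subseteq> A" "L < card B"
    then obtain x where "issol a' J' B x" using H unfolding a'_def J'_def by blast
    then show "\<exists>u. P u \<and> inj_on u J' \<and> u ` J' \<subseteq> B" unfolding issol_def P_def by blast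
  qed
  then obtain S where SS: "(\<forall>u\<in>S. P u \<and> inj_on u J' \<and> u ` J' \<subseteq> A) \<and> (\<forall>u\<in>S. \<forall>v\<in>S. u \<noteq> v \<longrightarrow> u ` J' \<inter> v ` J' = {})
     \<and> finite S \<and> card A \<le> L + card J' * card S" by (rule exE)
  note S1 = SS[THEN conjunct1] and S2 = SS[THEN conjunct2, THEN conjunct1]
    and S3 = SS[THEN conjunct2, THEN conjunct2, THEN conjunct1] and S4 = SS[THEN conjunct2, THEN conjunct2, THEN conjunct2]
  have inj: "\<forall>u\<in>S. inj_on u J'" using S1 by blast
  note D = disj_blocks[OF inj S2]
  have iJ': "i \<in> J'" using ij unfolding J'_def by blast
  have J'R: "J' = insert i R" "i \<notin> R" using ij unfolding J'_def R_def by auto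
  have JR: "J = insert i (insert j R)" "j \<notin> R" using ij unfolding R_def by auto
  have finR: "finite R" using finJ unfolding R_def by simp
  have RJ': "R \<subseteq> J'" unfolding R_def J'_def by blast
  have inA: "u l \<in> A" if "u \<in> S" "l \<in> J'" for u l using S1 that by blast
  have vec: "u l t = 0" if "u \<in> S" "l \<in> J'" "n \<le> t" for u l t
    using inA[OF that(1,2)] A that(3) by (auto simp: fvecs_van)
  have diag0: "(a i + a j) * u i t + (\<Sum>l\<in>R. a l * u l t) = 0" if "u \<in> S" for u t
  proof -
    have "P u" using S1 that by blast
    then have "(\<Sum>l\<in>J'. a' l * u l t) = 0" unfolding P_def by blast
    moreover have "(\<Sum>l\<in>J'. a' l * u l t) = a' i * u i t + (\<Sum>l\<in>R. a' l * u l t)"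
      using J'R finR by simp
    moreover have "(\<Sum>l\<in>R. a' l * u l t) = (\<Sum>l\<in>R. a l * u l t)"
      using J'R(2) unfolding a'_def by (intro sum.cong) auto
    ultimately show ?thesis unfolding a'_def by simp
  qed
  have cS: "card S \<le> 3 * card (mons (card (UNIV::'a set)) n)"
  proof (rule slice_bound[where pa = "\<lambda>u t. a i * u i t" and pb = "\<lambda>u t. a j * u i t"
        and pc = "\<lambda>u t. \<Sum>l\<in>R. a l * u l t"])
    show "finite S" by (rule S3)
  next
    fix u t assume u: "u \<in> S"
    show "n \<le> t \<Longrightarrow> a i * u i t = 0 \<and> a j * u i t = 0 \<and> (\<Sum>l\<in>R. a l * u l t) = 0"
      using vec[OF u iJ'] vec[OF u] RJ' by (auto intro!: sum.neutral)
    show "a i * u i t + a j * u i t + (\<Sum>l\<in>R. a l * u l t) = 0"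
      using diag0[OF u, of t] by (simp add: algebra_simps)
  next
    fix s1 s2 s3 assume s1: "s1 \<in> S" and s2: "s2 \<in> S" and s3: "s3 \<in> S"
      and H': "\<forall>t. a i * s1 i t + a j * s2 i t + (\<Sum>l\<in>R. a l * s3 l t) = 0"
    show "s1 = s2 \<and> s2 = s3"
    proof (cases "s1 = s2")
      case True
      have "s1 i = s3 i"
      proof
        fix t
        have "(a i + a j) * (s1 i t - s3 i t) = (a i * s1 i t + a j * s2 i t + (\<Sum>l\<in>R. a l * s3 l t))
            - ((a i + a j) * s3 i t + (\<Sum>l\<in>R. a l * s3 l t))" using True by (simp add: algebra_simps)
        then have "(a i + a j) * (s1 i t - s3 i t) = 0" using H' diag0[OF s3, of t] by simp
        then show "s1 i t = s3 i t" using b by simp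
      qed
      then have "s1 = s3" using D[OF s1 s3 iJ' iJ'] by blast
      then show ?thesis using True by simp
    next
      case False
      define x where "x l = (if l = i then s1 i else if l = j then s2 i else s3 l)" for l
      have xR: "x l = s3 l" if "l \<in> R" for l using that J'R(2) JR(2) unfolding x_def by auto
      have "issol a J A x" unfolding issol_def
      proof (intro conjI ballI allI)
        fix l assume "l \<in> J"
        then consider "l = i" | "l = j" | "l \<in> R" using JR by blast
        then show "x l \<in> A"
        proof cases
          case 1 then show ?thesis using inA[OF s1 iJ'] unfolding x_def by simp
        next
          case 2 then show ?thesis using inA[OF s2 iJ'] ij unfolding x_def by simp
        next
          case 3 then show ?thesis using inA[OF s3] RJ' xR by auto
        qed
      next
        show "inj_on x J"
        proof (rule inj_onI)
          fix l1 l2 assume l1: "l1 \<in> J" and l2: "l2 \<in> J" and e: "x l1 = x l2"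
          have c1: "l1 = i \<or> l1 = j \<or> l1 \<in> R" using l1 JR by blast
          have c2: "l2 = i \<or> l2 = j \<or> l2 \<in> R" using l2 JR by blast
          have xi: "x i = s1 i" and xj: "x j = s2 i" using ij unfolding x_def by auto
          show "l1 = l2"
            using c1 c2 e xi xj xR False J'R(2) JR(2) D[OF s1 s2 iJ' iJ'] D[OF s2 s1 iJ' iJ']
              D[OF s1 s3 iJ'] D[OF s3 s1 _ iJ'] D[OF s2 s3 iJ'] D[OF s3 s2 _ iJ'] D[OF s3 s3] RJ'
            by (metis subsetD)
        qed
      next
        fix t
        have "(\<Sum>l\<in>J. a l * x l t) = a i * x i t + (a j * x j t + (\<Sum>l\<in>R. a l * x l t))"
          using JR J'R(2) ij finR by simp
        also have "(\<Sum>l\<in>R. a l * x l t) = (\<Sum>l\<in>R. a l * s3 l t)" using xR by (intro sum.cong) auto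
        finally show "(\<Sum>l\<in>J. a l * x l t) = 0" using H' ij unfolding x_def by (simp add: add.assoc)
      qed
      then show ?thesis using nos by blast
    qed
  qed
  have "card J' \<le> card J" unfolding J'_def using finJ by (simp add: card_Diff1_le)
  then have "card J' * card S \<le> card J * (3 * card (mons (card (UNIV::'a set)) n))"
    using cS by (intro mult_mono) auto
  then show ?thesis using S4 by linarith
qed

lemma caseB:
  fixes a :: "nat \<Rightarrow> 'a::{field,finite}"
  assumes finJ: "finite J" and ij: "i \<in> J" "j \<in> J" "i \<noteq> j" and b: "a i + a j = 0"
    and z: "z \<in> J" "z \<noteq> i" "z \<noteq> j" and az: "a z \<noteq> 0"
    and A: "A \<subseteq> fvecs n" and nos: "\<not> (\<exists>x. issol a J A x)"
    and H: "\<And>B. B \<subseteq> A \<Longrightarrow> L < card B \<Longrightarrow> \<exists>x. issol a (J - {i, j}) B x"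
  shows "card A \<le> (L + card J) + card J * (3 * card (mons (card (UNIV::'a set)) n))"
proof -
  define I where "I = J - {j}"
  define R where "R = J - {i, j}"
  define X where "X = R - {z}"
  define P where "P u = (\<forall>t. (\<Sum>l\<in>R. a l * u l t) = 0)" for u :: "nat \<Rightarrow> nat \<Rightarrow> 'a"
  have finA: "finite A" using A finite_fvecs finite_subset by blast
  have Ine: "I \<noteq> {}" using ij unfolding I_def by blast
  have finI: "finite I" using finJ unfolding I_def by simp
  have finR: "finite R" using finJ unfolding R_def by simp
  have IR: "I = insert i R" "i \<notin> R" using ij unfolding I_def R_def by auto
  have RX: "R = insert z X" "z \<notin> X" using z unfolding R_def X_def by auto
  have JI: "J = insert j I" "j \<notin> I" using ij unfolding I_def by auto
  have finX: "finite X" using finR unfolding X_def by simp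
  have zI: "z \<in> I" and iI: "i \<in> I" using z ij unfolding I_def by auto
  have XI: "X \<subseteq> I" unfolding X_def R_def I_def by blast
  have iX: "i \<notin> X" and jX: "j \<notin> X" and zX: "z \<notin> X" unfolding X_def R_def by auto
  have "\<exists>S. (\<forall>u\<in>S. P u \<and> inj_on u I \<and> u ` I \<subseteq> A) \<and> (\<forall>u\<in>S. \<forall>v\<in>S. u \<noteq> v \<longrightarrow> u ` I \<inter> v ` I = {})
     \<and> finite S \<and> card A \<le> (L + card J) + card I * card S"
  proof (rule greedy[OF finA finI Ine])
    fix B assume B: "B \<subseteq> A" "L + card J < card B"
    then obtain x where x: "issol a R B x" using H unfolding R_def by fastforce
    have "card (x ` R) \<le> card J"
      using card_image_le[OF finR, of x] card_mono[OF finJ, of R] unfolding R_def by fastforce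
    then have "\<not> B \<subseteq> x ` R" using B card_mono[of "x ` R" B] finR by fastforce
    then obtain w where w: "w \<in> B" "w \<notin> x ` R" by blast
    define u where "u = x(i := w)"
    have uR: "u l = x l" if "l \<in> R" for l using that IR(2) unfolding u_def by auto
    have "P u" unfolding P_def
    proof
      fix t
      have "(\<Sum>l\<in>R. a l * u l t) = (\<Sum>l\<in>R. a l * x l t)" using uR by (intro sum.cong) auto
      then show "(\<Sum>l\<in>R. a l * u l t) = 0" using x unfolding issol_def by simp
    qed
    moreover have "inj_on u I"
    proof -
      have "inj_on x R" using x unfolding issol_def by blast
      moreover have "inj_on u R = inj_on x R" by (rule inj_on_cong) (simp add: uR)
      ultimately have "inj_on u R" by simp
      moreover have "u i \<notin> u ` R" using w uR unfolding u_def by (auto simp: image_iff)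
      ultimately show ?thesis unfolding IR(1) using IR(2) by simp
    qed
    moreover have "u ` I \<subseteq> B" using x w uR unfolding issol_def IR(1) u_def by auto
    ultimately show "\<exists>u. P u \<and> inj_on u I \<and> u ` I \<subseteq> B" by blast
  qed
  then obtain S where SS: "(\<forall>u\<in>S. P u \<and> inj_on u I \<and> u ` I \<subseteq> A) \<and> (\<forall>u\<in>S. \<forall>v\<in>S. u \<noteq> v \<longrightarrow> u ` I \<inter> v ` I = {})
     \<and> finite S \<and> card A \<le> (L + card J) + card I * card S" by (rule exE)
  note S1 = SS[THEN conjunct1] and S2 = SS[THEN conjunct2, THEN conjunct1]
    and S3 = SS[THEN conjunct2, THEN conjunct2, THEN conjunct1] and S4 = SS[THEN conjunct2, THEN conjunct2, THEN conjunct2]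
  have inj: "\<forall>u\<in>S. inj_on u I" using S1 by blast
  note D = disj_blocks[OF inj S2]
  have inA: "u l \<in> A" if "u \<in> S" "l \<in> I" for u l using S1 that by blast
  have vec: "u l t = 0" if "u \<in> S" "l \<in> I" "n \<le> t" for u l t
    using inA[OF that(1,2)] A that(3) by (auto simp: fvecs_van)
  have diag1: "a z * u z t + (\<Sum>l\<in>X. a l * u l t) = 0" if "u \<in> S" for u t
  proof -
    have "P u" using S1 that by blast
    then have "(\<Sum>l\<in>R. a l * u l t) = 0" unfolding P_def by blast
    then show ?thesis using RX finX by simp
  qed
  have cS: "card S \<le> 3 * card (mons (card (UNIV::'a set)) n)"
  proof (rule slice_bound[where pa = "\<lambda>u t. a i * u i t + (\<Sum>l\<in>X. a l * u l t)" and pb = "\<lambda>u t. a j * u i t"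
        and pc = "\<lambda>u t. a z * u z t"])
    show "finite S" by (rule S3)
  next
    fix u t assume u: "u \<in> S"
    show "n \<le> t \<Longrightarrow> a i * u i t + (\<Sum>l\<in>X. a l * u l t) = 0 \<and> a j * u i t = 0 \<and> a z * u z t = 0"
      using vec[OF u iI] vec[OF u zI] vec[OF u] XI by (auto intro!: sum.neutral)
    have "a i * u i t + (\<Sum>l\<in>X. a l * u l t) + a j * u i t + a z * u z t
        = (a i + a j) * u i t + (a z * u z t + (\<Sum>l\<in>X. a l * u l t))" by (simp add: algebra_simps)
    then show "a i * u i t + (\<Sum>l\<in>X. a l * u l t) + a j * u i t + a z * u z t = 0"
      using diag1[OF u, of t] b by simp
  next
    fix s1 s2 s3 assume s1: "s1 \<in> S" and s2: "s2 \<in> S" and s3: "s3 \<in> S"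
      and H': "\<forall>t. a i * s1 i t + (\<Sum>l\<in>X. a l * s1 l t) + a j * s2 i t + a z * s3 z t = 0"
    show "s1 = s2 \<and> s2 = s3"
    proof (cases "s1 = s2")
      case True
      have "s3 z = s1 z"
      proof
        fix t
        have "a z * (s3 z t - s1 z t) = (a i * s1 i t + (\<Sum>l\<in>X. a l * s1 l t) + a j * s2 i t + a z * s3 z t)
            - (a i + a j) * s1 i t - (a z * s1 z t + (\<Sum>l\<in>X. a l * s1 l t))" using True by (simp add: algebra_simps)
        then have "a z * (s3 z t - s1 z t) = 0" using H' diag1[OF s1, of t] b by simp
        then show "s3 z t = s1 z t" using az by simp
      qed
      then have "s3 = s1" using D[OF s3 s1 zI zI] by blast
      then show ?thesis using True by simp
    next
      case False
      show ?thesis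
      proof (cases "s1 = s3")
        case True
        define x where "x l = (if l = j then s2 i else s1 l)" for l
        have xI: "x l = s1 l" if "l \<in> I" for l using that JI(2) unfolding x_def by auto
        have "issol a J A x" unfolding issol_def
        proof (intro conjI ballI allI)
          fix l assume "l \<in> J"
          then show "x l \<in> A" using inA[OF s2 iI] inA[OF s1] JI xI unfolding x_def by auto
        next
          have "inj_on x I = inj_on s1 I" by (rule inj_on_cong) (simp add: xI)
          then have "inj_on x I" using inj s1 by simp
          moreover have "x j \<notin> x ` I"
          proof
            assume "x j \<in> x ` I"
            then obtain l where "l \<in> I" "s2 i = s1 l" using xI unfolding x_def by auto
            then show False using D[OF s2 s1 iI] False by blast
          qed
          ultimately show "inj_on x J" unfolding JI(1) using JI(2) by simp
        next
          fix t
          have "(\<Sum>l\<in>J. a l * x l t) = a j * x j t + (\<Sum>l\<in>I. a l * x l t)" using JI finI by simp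
          also have "(\<Sum>l\<in>I. a l * x l t) = (\<Sum>l\<in>I. a l * s1 l t)" using xI by (intro sum.cong) auto
          also have "(\<Sum>l\<in>I. a l * s1 l t) = a i * s1 i t + (a z * s1 z t + (\<Sum>l\<in>X. a l * s1 l t))"
            using IR RX finX finR by simp
          finally show "(\<Sum>l\<in>J. a l * x l t) = 0" using H' True unfolding x_def
            by (simp add: algebra_simps)
        qed
        then show ?thesis using nos by blast
      next
        case False2: False
        define x where "x l = (if l = i then s1 i else if l = j then s2 i else if l = z then s3 z else s1 l)" for l
        have xX: "x l = s1 l" if "l \<in> X" for l using that iX jX zX unfolding x_def by auto
        have xi: "x i = s1 i" and xj: "x j = s2 i" and xz: "x z = s3 z" using ij z unfolding x_def by auto
        have JX: "J = insert i (insert j (insert z X))" using JI IR RX by auto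
        have "issol a J A x" unfolding issol_def
        proof (intro conjI ballI allI)
          fix l assume "l \<in> J"
          then consider "l = i" | "l = j" | "l = z" | "l \<in> X" using JX by blast
          then show "x l \<in> A"
            using inA[OF s1 iI] inA[OF s2 iI] inA[OF s3 zI] inA[OF s1] XI xi xj xz xX by cases auto
        next
          have i1: "inj_on x X"
          proof -
            have "inj_on x X = inj_on s1 X" by (rule inj_on_cong) (simp add: xX)
            moreover have "inj_on s1 X" using inj s1 XI inj_on_subset by blast
            ultimately show ?thesis by simp
          qed
          have i2: "x z \<notin> x ` X"
          proof
            assume "x z \<in> x ` X"
            then obtain l where l: "l \<in> X" "s3 z = s1 l" using xz xX by auto
            then show False using D[OF s3 s1 zI] XI False2 by blast
          qed
          have i3: "x j \<notin> x ` insert z X"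
          proof
            assume "x j \<in> x ` insert z X"
            then consider "s2 i = s3 z" | l where "l \<in> X" "s2 i = s1 l" using xj xz xX by auto
            then show False
            proof cases
              case 1 then show False using D[OF s2 s3 iI zI] z by blast
            next
              case 2 then show False using D[OF s2 s1 iI] XI False by blast
            qed
          qed
          have i4: "x i \<notin> x ` insert j (insert z X)"
          proof
            assume "x i \<in> x ` insert j (insert z X)"
            then consider "s1 i = s2 i" | "s1 i = s3 z" | l where "l \<in> X" "s1 i = s1 l" using xi xj xz xX by auto
            then show False
            proof cases
              case 1 then show False using D[OF s1 s2 iI iI] False by blast
            next
              case 2 then show False using D[OF s1 s3 iI zI] False2 by blast
            next
              case 3 then show False using D[OF s1 s1 iI] XI iX by blast
            qed
          qed
          have "inj_on x (insert i (insert j (insert z X)))"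
            using i1 i2 i3 i4 iX jX zX ij z by (simp add: inj_on_insert)
          then show "inj_on x J" using JX by simp
        next
          fix t
          have "(\<Sum>l\<in>J. a l * x l t) = a i * x i t + (a j * x j t + (a z * x z t + (\<Sum>l\<in>X. a l * x l t)))"
            using JX iX jX zX ij z finX by simp
          also have "(\<Sum>l\<in>X. a l * x l t) = (\<Sum>l\<in>X. a l * s1 l t)" using xX by (intro sum.cong) auto
          finally show "(\<Sum>l\<in>J. a l * x l t) = 0" using H' xi xj xz by (simp add: algebra_simps)
        qed
        then show ?thesis using nos by blast
      qed
    qed
  qed
  have "card I \<le> card J" unfolding I_def using finJ by (simp add: card_Diff1_le)
  then have "card I * card S \<le> card J * (3 * card (mons (card (UNIV::'a set)) n))"
    using cS by (intro mult_mono) auto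
  then show ?thesis using S4 by linarith
qed

lemma caseB4:
  fixes a :: "nat \<Rightarrow> 'a::{field,finite}"
  assumes J: "J = {j1, j2, j3, j4}" and d: "j1 \<noteq> j2" "j1 \<noteq> j3" "j1 \<noteq> j4" "j2 \<noteq> j3" "j2 \<noteq> j4" "j3 \<noteq> j4"
    and z12: "a j1 + a j2 = 0" and z34: "a j3 + a j4 = 0" and nz: "a j1 \<noteq> 0" "a j3 \<noteq> 0"
    and A: "A \<subseteq> fvecs n" and nos: "\<not> (\<exists>x. issol a J A x)"
  shows "card A \<le> 1 + 2 * (3 * card (mons (card (UNIV::'a set)) n))"
proof -
  define I where "I = {j1, j3}"
  have finA: "finite A" using A finite_fvecs finite_subset by blast
  have "\<exists>S. (\<forall>u\<in>S. True \<and> inj_on u I \<and> u ` I \<subseteq> A) \<and> (\<forall>u\<in>S. \<forall>v\<in>S. u \<noteq> v \<longrightarrow> u ` I \<inter> v ` I = {})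
     \<and> finite S \<and> card A \<le> 1 + card I * card S"
  proof (rule greedy[OF finA])
    show "finite I" "I \<noteq> {}" unfolding I_def by auto
    fix B assume B: "B \<subseteq> A" "1 < card B"
    have "finite B" using B finA finite_subset by blast
    then obtain b1 b2 where b: "b1 \<in> B" "b2 \<in> B" "b1 \<noteq> b2"
      using B(2) card_le_Suc0_iff_eq[of B] by (metis One_nat_def not_le)
    define u where "u l = (if l = j1 then b1 else b2)" for l
    have "inj_on u I" unfolding I_def u_def using b d by (simp add: inj_on_def)
    moreover have "u ` I \<subseteq> B" unfolding I_def u_def using b d by auto
    ultimately show "\<exists>u. True \<and> inj_on u I \<and> u ` I \<subseteq> B" by blast
  qed
  then obtain S where SS: "(\<forall>u\<in>S. True \<and> inj_on u I \<and> u ` I \<subseteq> A) \<and> (\<forall>u\<in>S. \<forall>v\<in>S. u \<noteq> v \<longrightarrow> u ` I \<inter> v ` I = {})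
     \<and> finite S \<and> card A \<le> 1 + card I * card S" by (rule exE)
  note S1 = SS[THEN conjunct1] and S2 = SS[THEN conjunct2, THEN conjunct1]
    and S3 = SS[THEN conjunct2, THEN conjunct2, THEN conjunct1] and S4 = SS[THEN conjunct2, THEN conjunct2, THEN conjunct2]
  have inj: "\<forall>u\<in>S. inj_on u I" using S1 by blast
  note D = disj_blocks[OF inj S2]
  have i1: "j1 \<in> I" and i3: "j3 \<in> I" unfolding I_def by auto
  have inA: "u l \<in> A" if "u \<in> S" "l \<in> I" for u l using S1 that by blast
  have vec: "u l t = 0" if "u \<in> S" "l \<in> I" "n \<le> t" for u l t
    using inA[OF that(1,2)] A that(3) by (auto simp: fvecs_van)
  have a2: "a j2 = - a j1" using z12 by (simp add: eq_neg_iff_add_eq_0 add.commute)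
  have a4: "a j4 = - a j3" using z34 by (simp add: eq_neg_iff_add_eq_0 add.commute)
  have cS: "card S \<le> 3 * card (mons (card (UNIV::'a set)) n)"
  proof (rule slice_bound[where pa = "\<lambda>u t. a j1 * u j1 t + a j3 * u j3 t" and pb = "\<lambda>u t. a j2 * u j1 t"
        and pc = "\<lambda>u t. a j4 * u j3 t"])
    show "finite S" by (rule S3)
  next
    fix u t assume u: "u \<in> S"
    show "n \<le> t \<Longrightarrow> a j1 * u j1 t + a j3 * u j3 t = 0 \<and> a j2 * u j1 t = 0 \<and> a j4 * u j3 t = 0"
      using vec[OF u i1] vec[OF u i3] by simp
    show "a j1 * u j1 t + a j3 * u j3 t + a j2 * u j1 t + a j4 * u j3 t = 0"
      using a2 a4 by (simp add: algebra_simps)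
  next
    fix s1 s2 s3 assume s1: "s1 \<in> S" and s2: "s2 \<in> S" and s3: "s3 \<in> S"
      and H': "\<forall>t. a j1 * s1 j1 t + a j3 * s1 j3 t + a j2 * s2 j1 t + a j4 * s3 j3 t = 0"
    show "s1 = s2 \<and> s2 = s3"
    proof (cases "s1 = s2")
      case True
      have "s1 j3 = s3 j3"
      proof
        fix t
        have "a j3 * (s1 j3 t - s3 j3 t) = a j1 * s1 j1 t + a j3 * s1 j3 t + a j2 * s2 j1 t + a j4 * s3 j3 t"
          using True a2 a4 by (simp add: algebra_simps)
        then have "a j3 * (s1 j3 t - s3 j3 t) = 0" using H' by simp
        then show "s1 j3 t = s3 j3 t" using nz by simp
      qed
      then have "s1 = s3" using D[OF s1 s3 i3 i3] by blast
      then show ?thesis using True by simp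
    next
      case False
      show ?thesis
      proof (cases "s1 = s3")
        case True
        have "s1 j1 = s2 j1"
        proof
          fix t
          have "a j1 * (s1 j1 t - s2 j1 t) = a j1 * s1 j1 t + a j3 * s1 j3 t + a j2 * s2 j1 t + a j4 * s3 j3 t"
            using True a2 a4 by (simp add: algebra_simps)
          then have "a j1 * (s1 j1 t - s2 j1 t) = 0" using H' by simp
          then show "s1 j1 t = s2 j1 t" using nz by simp
        qed
        then have "s1 = s2" using D[OF s1 s2 i1 i1] by blast
        then show ?thesis using False by simp
      next
        case False2: False
        define x where "x l = (if l = j1 then s1 j1 else if l = j3 then s1 j3 else if l = j2 then s2 j1 else s3 j3)" for l
        have xv: "x j1 = s1 j1" "x j3 = s1 j3" "x j2 = s2 j1" "x j4 = s3 j3" using d unfolding x_def by auto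
        have "issol a J A x" unfolding issol_def
        proof (intro conjI ballI allI)
          fix l assume "l \<in> J"
          then show "x l \<in> A" using J xv inA[OF s1 i1] inA[OF s1 i3] inA[OF s2 i1] inA[OF s3 i3] by auto
        next
          have e13: "s1 j1 \<noteq> s1 j3" using D[OF s1 s1 i1 i3] d by blast
          have e12: "s1 j1 \<noteq> s2 j1" using D[OF s1 s2 i1 i1] False by blast
          have e14: "s1 j1 \<noteq> s3 j3" using D[OF s1 s3 i1 i3] False2 by blast
          have e32: "s1 j3 \<noteq> s2 j1" using D[OF s1 s2 i3 i1] False by blast
          have e34: "s1 j3 \<noteq> s3 j3" using D[OF s1 s3 i3 i3] False2 by blast
          have e24: "s2 j1 \<noteq> s3 j3" using D[OF s2 s3 i1 i3] d by blast
          show "inj_on x J" unfolding J using xv d e13 e12 e14 e32 e34 e24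
            by (auto simp: inj_on_insert)
        next
          fix t
          show "(\<Sum>l\<in>J. a l * x l t) = 0" unfolding J using d xv H' by (simp add: algebra_simps)
        qed
        then show ?thesis using nos by blast
      qed
    qed
  qed
  have "card I = 2" unfolding I_def using d by simp
  then have "card A \<le> 1 + 2 * card S" using S4 by simp
  then show ?thesis using cS by linarith
qed

lemma mons_ne: "0 < q \<Longrightarrow> 1 \<le> card (mons q n)"
proof -
  assume q: "0 < q"
  have "restrict (\<lambda>_. 0) {..<n} \<in> mons q n" by (rule restrict_in_mons) (use q in auto)
  then have "mons q n \<noteq> {}" by blast
  then show ?thesis using finite_mons[of q n] by (simp add: Suc_le_eq card_gt_0_iff)
qed

lemma sum_two:
  fixes a :: "nat \<Rightarrow> 'a::comm_monoid_add"
  assumes "finite J" "i \<in> J" "j \<in> J" "i \<noteq> j"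
  shows "(\<Sum>l\<in>J. a l) = a i + a j + (\<Sum>l\<in>J - {i, j}. a l)"
proof -
  have "J = insert i (insert j (J - {i, j}))" using assms by auto
  then have "(\<Sum>l\<in>J. a l) = (\<Sum>l\<in>insert i (insert j (J - {i, j})). a l)" by simp
  also have "\<dots> = a i + (a j + (\<Sum>l\<in>J - {i, j}. a l))" using assms by simp
  finally show ?thesis by (simp add: add.assoc)
qed

lemma main_claim:
  fixes a :: "nat \<Rightarrow> 'a::{field,finite}"
  shows "finite J \<Longrightarrow> 3 \<le> card J \<Longrightarrow> (\<forall>j\<in>J. a j \<noteq> 0) \<Longrightarrow> (\<Sum>j\<in>J. a j) = 0 \<Longrightarrow>
    \<exists>K::nat. \<forall>n A. A \<subseteq> fvecs n \<longrightarrow> \<not> (\<exists>x. issol a J A x) \<longrightarrow> card A \<le> K * card (mons (card (UNIV::'a set)) n)"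
proof (induction "card J" arbitrary: J a rule: less_induct)
  case less
  note fin = less.prems(1) and c3 = less.prems(2) and nz = less.prems(3) and sz = less.prems(4)
  have q0: "0 < card (UNIV::'a set)" by (simp add: card_gt_0_iff)
  have M1: "1 \<le> card (mons (card (UNIV::'a set)) n)" for n using mons_ne[OF q0] by blast
  show ?case
  proof (cases "card J = 3")
    case True
    then obtain j1 j2 j3 where J: "J = {j1, j2, j3}" "j1 \<noteq> j2" "j2 \<noteq> j3" "j1 \<noteq> j3"
      using card_3_iff by metis
    have s3: "a j1 + a j2 + a j3 = 0" using sz J by (simp add: add.assoc)
    have nz3: "a j1 \<noteq> 0" "a j2 \<noteq> 0" "a j3 \<noteq> 0" using nz J by auto
    show ?thesis
      by (rule exI[of _ 3], intro allI impI, rule case3[OF J nz3 s3]) auto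
  next
    case False
    then have c4: "4 \<le> card J" using c3 by simp
    show ?thesis
    proof (cases "\<exists>i\<in>J. \<exists>j\<in>J. i \<noteq> j \<and> a i + a j \<noteq> 0")
      case True
      then obtain i j where ij: "i \<in> J" "j \<in> J" "i \<noteq> j" "a i + a j \<noteq> 0" by blast
      define J' where "J' = J - {j}"
      define a' where "a' = a(i := a i + a j)"
      have lt: "card J' < card J" unfolding J'_def using fin ij c4 by simp
      have fin': "finite J'" unfolding J'_def using fin by simp
      have c3': "3 \<le> card J'" unfolding J'_def using fin ij c4 by simp
      have nz': "\<forall>l\<in>J'. a' l \<noteq> 0" unfolding J'_def a'_def using nz ij by auto
      have sz': "(\<Sum>l\<in>J'. a' l) = 0"
      proof -
        have "J' = insert i (J - {i, j})" "i \<notin> J - {i, j}" unfolding J'_def using ij by auto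
        then have "(\<Sum>l\<in>J'. a' l) = a' i + (\<Sum>l\<in>J - {i, j}. a' l)" using fin by simp
        also have "(\<Sum>l\<in>J - {i, j}. a' l) = (\<Sum>l\<in>J - {i, j}. a l)" unfolding a'_def by (intro sum.cong) auto
        finally have "(\<Sum>l\<in>J'. a' l) = a i + a j + (\<Sum>l\<in>J - {i, j}. a l)" unfolding a'_def by simp
        then show ?thesis using sum_two[OF fin ij(1-3), of a] sz by simp
      qed
      obtain K' where K': "\<forall>n A. A \<subseteq> fvecs n \<longrightarrow> \<not> (\<exists>x. issol a' J' A x) \<longrightarrow> card A \<le> K' * card (mons (card (UNIV::'a set)) n)"
        using less.hyps[OF lt fin' c3' nz' sz'] by blast
      show ?thesis
      proof (rule exI[of _ "K' + 3 * card J"], intro allI impI)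
        fix n and A :: "(nat \<Rightarrow> 'a) set"
        assume A: "A \<subseteq> fvecs n" and nos: "\<not> (\<exists>x. issol a J A x)"
        have "card A \<le> K' * card (mons (card (UNIV::'a set)) n) + card J * (3 * card (mons (card (UNIV::'a set)) n))"
        proof (rule caseA[OF fin ij A nos])
          fix B assume B: "B \<subseteq> A" "K' * card (mons (card (UNIV::'a set)) n) < card B"
          have "B \<subseteq> fvecs n" using A B by blast
          then show "\<exists>x. issol (a(i := a i + a j)) (J - {j}) B x"
            using K' B(2) unfolding a'_def J'_def by (meson not_le)
        qed
        then show "card A \<le> (K' + 3 * card J) * card (mons (card (UNIV::'a set)) n)"
          by (simp add: algebra_simps)
      qed
    next
      case False
      then have pz: "\<And>i j. i \<in> J \<Longrightarrow> j \<in> J \<Longrightarrow> i \<noteq> j \<Longrightarrow> a i + a j = 0" by blast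
      show ?thesis
      proof (cases "card J = 4")
        case True
        obtain j1 where j1: "j1 \<in> J" using c4 by fastforce
        have "card (J - {j1}) = 3" using True j1 fin by simp
        then obtain j2 j3 j4 where J3: "J - {j1} = {j2, j3, j4}" "j2 \<noteq> j3" "j3 \<noteq> j4" "j2 \<noteq> j4"
          using card_3_iff by metis
        have J: "J = {j1, j2, j3, j4}" using J3 j1 by blast
        have d: "j1 \<noteq> j2" "j1 \<noteq> j3" "j1 \<noteq> j4" using J3 by blast+
        have z12: "a j1 + a j2 = 0" and z34: "a j3 + a j4 = 0" using pz J d J3 by auto
        have n1: "a j1 \<noteq> 0" and n3: "a j3 \<noteq> 0" using nz J by auto
        show ?thesis
        proof (rule exI[of _ 7], intro allI impI)
          fix n and A :: "(nat \<Rightarrow> 'a) set"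
          assume A: "A \<subseteq> fvecs n" and nos: "\<not> (\<exists>x. issol a J A x)"
          have "card A \<le> 1 + 2 * (3 * card (mons (card (UNIV::'a set)) n))"
            by (rule caseB4[OF J d(1,2,3) J3(2) J3(4) J3(3) z12 z34 n1 n3 A nos])
          then show "card A \<le> 7 * card (mons (card (UNIV::'a set)) n)" using M1[of n] by linarith
        qed
      next
        case False
        then have c5: "5 \<le> card J" using c4 by simp
        obtain i where i: "i \<in> J" using c4 by fastforce
        have "J - {i} \<noteq> {}"
        proof
          assume "J - {i} = {}"
          then have "J \<subseteq> {i}" by blast
          then have "card J \<le> 1" using card_mono[of "{i}" J] by simp
          then show False using c4 by simp
        qed
        then obtain j where j: "j \<in> J - {i}" by blast
        have ij: "i \<in> J" "j \<in> J" "i \<noteq> j" using i j by auto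
        define R where "R = J - {i, j}"
        have cR: "card R = card J - 2" unfolding R_def using fin ij by (simp add: card_Diff_subset)
        have lt: "card R < card J" using cR c4 by simp
        have finR: "finite R" unfolding R_def using fin by simp
        have c3R: "3 \<le> card R" using cR c5 by simp
        have nzR: "\<forall>l\<in>R. a l \<noteq> 0" unfolding R_def using nz by auto
        have szR: "(\<Sum>l\<in>R. a l) = 0" using sum_two[OF fin ij, of a] sz pz[OF ij] unfolding R_def by simp
        obtain z where z: "z \<in> R" using c3R by fastforce
        have z': "z \<in> J" "z \<noteq> i" "z \<noteq> j" using z unfolding R_def by auto
        have az: "a z \<noteq> 0" using nz z' by auto
        obtain K'' where K'': "\<forall>n A. A \<subseteq> fvecs n \<longrightarrow> \<not> (\<exists>x. issol a R A x) \<longrightarrow> card A \<le> K'' * card (mons (card (UNIV::'a set)) n)"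
          using less.hyps[OF lt finR c3R nzR szR] by blast
        show ?thesis
        proof (rule exI[of _ "K'' + 4 * card J"], intro allI impI)
          fix n and A :: "(nat \<Rightarrow> 'a) set"
          assume A: "A \<subseteq> fvecs n" and nos: "\<not> (\<exists>x. issol a J A x)"
          have "card A \<le> (K'' * card (mons (card (UNIV::'a set)) n) + card J) + card J * (3 * card (mons (card (UNIV::'a set)) n))"
          proof (rule caseB[OF fin ij pz[OF ij] z' az A nos])
            fix B assume B: "B \<subseteq> A" "K'' * card (mons (card (UNIV::'a set)) n) < card B"
            have "B \<subseteq> fvecs n" using A B by blast
            then show "\<exists>x. issol a (J - {i, j}) B x"
              using K'' B(2) unfolding R_def by (meson not_le)
          qed
          moreover have "card J \<le> card J * card (mons (card (UNIV::'a set)) n)" using M1[of n] by simp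
          moreover have "(K'' + 4 * card J) * card (mons (card (UNIV::'a set)) n) =
              K'' * card (mons (card (UNIV::'a set)) n) + card J * (3 * card (mons (card (UNIV::'a set)) n))
              + card J * card (mons (card (UNIV::'a set)) n)" by (simp add: algebra_simps)
          ultimately show "card A \<le> (K'' + 4 * card J) * card (mons (card (UNIV::'a set)) n)"
            by linarith
        qed
      qed
    qed
  qed
qed

theorem theorem2:
  fixes a :: "nat \<Rightarrow> 'a::{field,finite}" and d :: nat
  assumes "d \<ge> 4"
    and "\<forall>j<d. a j \<noteq> 0"
    and "(\<Sum>j<d. a j) = 0"
  shows "\<exists>c::real. c < real (card (UNIV :: 'a set)) \<and>
    (\<exists>N. \<forall>n\<ge>N. \<forall>A. A \<subseteq> fvecs n \<and> real (card A) > c ^ n \<longrightarrow>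
       (\<exists>x :: nat \<Rightarrow> nat \<Rightarrow> 'a. (\<forall>j<d. x j \<in> A) \<and> inj_on x {..<d} \<and>
            (\<forall>i. (\<Sum>j<d. a j * x j i) = 0)))"
proof -
  define q where "q = card (UNIV :: 'a set)"
  have q2: "q \<ge> 2"
  proof -
    have "{0::'a, 1} \<subseteq> UNIV" by simp
    then have "card {0::'a, 1} \<le> q" unfolding q_def by (intro card_mono) auto
    then show ?thesis by simp
  qed
  obtain y :: real where y: "0 < y" "y < 1" "(\<Sum>k<q. y ^ (3 * k)) < real q * y ^ (q - 1)"
    using exists_y[OF q2] by blast
  define Sy where "Sy = (\<Sum>k<q. y ^ (3 * k))"
  define G where "G = Sy / y ^ (q - 1)"
  have ypos: "0 < y ^ (q - 1)" using y by simp
  have Sypos: "0 < Sy"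
  proof -
    have "(0::nat) \<in> {..<q}" using q2 by simp
    then have "{..<q} \<noteq> {}" by blast
    then show ?thesis unfolding Sy_def using y by (intro sum_pos) auto
  qed
  have Gpos: "0 < G" unfolding G_def using Sypos ypos by simp
  have Glt: "G < real q" unfolding G_def Sy_def using y(3) ypos by (simp add: divide_less_eq)
  have Mb: "real (card (mons q n)) \<le> G ^ n" for n
  proof -
    have "real (card (mons q n)) * y ^ ((q - 1) * n) \<le> Sy ^ n"
      unfolding Sy_def by (rule mons_card_bound) (use y in auto)
    moreover have "y ^ ((q - 1) * n) = (y ^ (q - 1)) ^ n" by (simp add: power_mult)
    ultimately have "real (card (mons q n)) * (y ^ (q - 1)) ^ n \<le> Sy ^ n" by simp
    moreover have "0 < (y ^ (q - 1)) ^ n" using ypos by simp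
    ultimately have "real (card (mons q n)) \<le> Sy ^ n / (y ^ (q - 1)) ^ n" by (simp add: le_divide_eq)
    then show ?thesis unfolding G_def by (simp add: power_divide)
  qed
  have finJ: "finite {..<d}" by simp
  have cJ: "3 \<le> card {..<d}" using assms(1) by simp
  have nzJ: "\<forall>j\<in>{..<d}. a j \<noteq> 0" using assms(2) by simp
  have szJ: "(\<Sum>j\<in>{..<d}. a j) = 0" using assms(3) by simp
  obtain K :: nat where K: "\<forall>n A. A \<subseteq> fvecs n \<longrightarrow> \<not> (\<exists>x. issol a {..<d} A x) \<longrightarrow> card A \<le> K * card (mons q n)"
    using main_claim[OF finJ cJ nzJ szJ] unfolding q_def by blast
  define c where "c = (G + real q) / 2"
  have cq: "c < real q" unfolding c_def using Glt by simp
  have Gc: "G < c" unfolding c_def using Glt by simp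
  have cpos: "0 < c" using Gpos Gc by simp
  define r where "r = G / c"
  have r: "0 < r" "r < 1" unfolding r_def using Gpos cpos Gc by (auto simp: divide_less_eq)
  obtain N where N: "r ^ N < 1 / (real K + 1)"
    using real_arch_pow_inv[of "1 / (real K + 1)" r] r by auto
  show ?thesis
  proof (intro exI[of _ c] conjI exI[of _ N] allI impI)
    show "c < real (card (UNIV :: 'a set))" using cq unfolding q_def .
  next
    fix n and A :: "(nat \<Rightarrow> 'a) set" assume n: "N \<le> n" and A: "A \<subseteq> fvecs n \<and> c ^ n < real (card A)"
    show "\<exists>x :: nat \<Rightarrow> nat \<Rightarrow> 'a. (\<forall>j<d. x j \<in> A) \<and> inj_on x {..<d} \<and> (\<forall>i. (\<Sum>j<d. a j * x j i) = 0)"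
    proof (rule ccontr)
      assume ns: "\<not> ?thesis"
      have "\<not> (\<exists>x. issol a {..<d} A x)" using ns unfolding issol_def by auto
      then have "card A \<le> K * card (mons q n)" using K A by blast
      then have "real (card A) \<le> real K * real (card (mons q n))" by (metis of_nat_le_iff of_nat_mult)
      also have "\<dots> \<le> real K * G ^ n" using Mb[of n] by (intro mult_left_mono) auto
      also have "G ^ n = r ^ n * c ^ n" unfolding r_def using cpos by (simp add: power_divide)
      also have "r ^ n \<le> r ^ N" using r n by (intro power_decreasing) auto
      then have "real K * (r ^ n * c ^ n) \<le> real K * (1 / (real K + 1) * c ^ n)"
        using N cpos by (intro mult_left_mono mult_right_mono) auto
      also have "real K * (1 / (real K + 1) * c ^ n) \<le> c ^ n"
        using cpos by (simp add: field_simps)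
      finally have "real (card A) \<le> c ^ n" by simp
      then show False using A by simp
    qed
  qed
qed

end
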